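(* Let $(Y,\tau_Y)$ be a locally convex vector lattice and $X\subset Y$ a sublattice. Let $K=(K(t))_{t\geq0}$ be a family of operators $X\to Y$ and let $S=(S(t))_{t\geq0}$ be a $K$-convex monotone semigroup on $X$ with $S(t)0\geq0$ for all $t\geq0$. Then for all $t\geq0$ and $u,v\in X$, $$|S(t)u-v|\leq|K(t)u-v|+|K(t)(-u)+v|.$$ In particular, $p(S(t)u-v)\leq p(K(t)u-v)+p(K(t)(-u)+v)$ for all $t\geq0$, $u,v\in X$ and every lattice seminorm $p\colon Y\to[0,\infty)$.
   Context: $|u|=u\vee(-u)$. A lattice seminorm is a seminorm $p$ on $Y$ with $p(u)\leq p(v)$ whenever $|u|\leq|v|$. A monotone semigroup on $X$ is a family $S=(S(t))_{t\geq0}$ of maps $X\to X$ with $S(0)u=u$, $S(t)S(s)u=S(t+s)u$ for all $s,t\geq0$, $u\in X$, and each $S(t)$ monotone ($u\leq v\Rightarrow S(t)u\leq S(t)v$). $S$ is $K$-convex if $S(t)(\lambda u+(1-\lambda)v)\leq\lambda S(t)u+(1-\lambda)K(t)v$ for all $t\geq0$, $u,v\in X$, $\lambda\in[0,1]$. *)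

theory Defs
  imports Main "HOL-Analysis.Analysis"
begin

definition vabs :: "'y::{ordered_real_vector,lattice} \<Rightarrow> 'y" where
  "vabs u = sup u (- u)"

definition sublattice :: "'y::{ordered_real_vector,lattice} set \<Rightarrow> bool" where
  "sublattice X \<longleftrightarrow> subspace X \<and> (\<forall>u\<in>X. \<forall>v\<in>X. sup u v \<in> X \<and> inf u v \<in> X)"

definition seminorm :: "('y::real_vector \<Rightarrow> real) \<Rightarrow> bool" where
  "seminorm p \<longleftrightarrow> (\<forall>u. 0 \<le> p u) \<and> (\<forall>u v. p (u + v) \<le> p u + p v)
     \<and> (\<forall>c u. p (c *\<^sub>R u) = \<bar>c\<bar> * p u)"

definition lattice_seminorm :: "('y::{ordered_real_vector,lattice} \<Rightarrow> real) \<Rightarrow> bool" where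
  "lattice_seminorm p \<longleftrightarrow> seminorm p \<and> (\<forall>u v. vabs u \<le> vabs v \<longrightarrow> p u \<le> p v)"

definition monotone_semigroup :: "'y::{ordered_real_vector,lattice} set \<Rightarrow> (real \<Rightarrow> 'y \<Rightarrow> 'y) \<Rightarrow> bool" where
  "monotone_semigroup X S \<longleftrightarrow>
     (\<forall>t\<ge>0. \<forall>u\<in>X. S t u \<in> X) \<and>
     (\<forall>u\<in>X. S 0 u = u) \<and>
     (\<forall>s\<ge>0. \<forall>t\<ge>0. \<forall>u\<in>X. S t (S s u) = S (t + s) u) \<and>
     (\<forall>t\<ge>0. \<forall>u\<in>X. \<forall>v\<in>X. u \<le> v \<longrightarrow> S t u \<le> S t v)"

definition K_convex :: "'y::{ordered_real_vector,lattice} set \<Rightarrow> (real \<Rightarrow> 'y \<Rightarrow> 'y) \<Rightarrow> (real \<Rightarrow> 'y \<Rightarrow> 'y) \<Rightarrow> bool" where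
  "K_convex X K S \<longleftrightarrow>
     (\<forall>t\<ge>0. \<forall>u\<in>X. \<forall>v\<in>X. \<forall>lam::real. 0 \<le> lam \<and> lam \<le> 1 \<longrightarrow>
        S t (lam *\<^sub>R u + (1 - lam) *\<^sub>R v) \<le> lam *\<^sub>R S t u + (1 - lam) *\<^sub>R K t v)"

end

theory Submission
  imports Defs
begin

lemma vabs_ge: "x \<le> vabs x" "- x \<le> vabs x"
  by (auto simp: vabs_def)

lemma vabs_nonneg: "0 \<le> vabs (x::'y::{ordered_real_vector,lattice})"
proof -
  have "x + (- x) \<le> vabs x + vabs x" by (rule add_mono) (auto simp: vabs_def)
  hence "0 \<le> (2::real) *\<^sub>R vabs x" by (simp add: scaleR_2)
  hence "(1/2::real) *\<^sub>R 0 \<le> (1/2::real) *\<^sub>R ((2::real) *\<^sub>R vabs x)"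
    by (intro scaleR_left_mono) auto
  thus ?thesis by simp
qed

lemma vabs_of_nonneg: "0 \<le> (x::'y::{ordered_real_vector,lattice}) \<Longrightarrow> vabs x = x"
proof -
  assume "0 \<le> x"
  hence "- x \<le> x" using order_trans[of "-x" 0 x] by (simp add: neg_le_0_iff_le)
  thus ?thesis by (simp add: vabs_def sup_absorb1)
qed

lemma vabs_le: "a \<le> w \<Longrightarrow> - a \<le> w \<Longrightarrow> vabs a \<le> w"
  by (simp add: vabs_def)

theorem lemma2p5:
  fixes X :: "'y::{ordered_real_vector,lattice} set"
    and S K :: "real \<Rightarrow> 'y \<Rightarrow> 'y"
  assumes "sublattice X"
    and "monotone_semigroup X S"
    and "K_convex X K S"
    and "\<forall>t\<ge>0. 0 \<le> S t 0"
  shows "(\<forall>t\<ge>0. \<forall>u\<in>X. \<forall>v\<in>X.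
            vabs (S t u - v) \<le> vabs (K t u - v) + vabs (K t (- u) + v))
       \<and> (\<forall>p. lattice_seminorm p \<longrightarrow> (\<forall>t\<ge>0. \<forall>u\<in>X. \<forall>v\<in>X.
            p (S t u - v) \<le> p (K t u - v) + p (K t (- u) + v)))"
proof -
  have sub: "subspace X" using assms(1) by (simp add: sublattice_def)
  have A: "vabs (S t u - v) \<le> vabs (K t u - v) + vabs (K t (- u) + v)"
    if t: "t \<ge> 0" and u: "u \<in> X" and v: "v \<in> X" for t u v
  proof -
    have mu: "- u \<in> X" using sub u by (simp add: subspace_neg)
    have KC: "\<And>lam. 0 \<le> lam \<Longrightarrow> lam \<le> 1 \<Longrightarrow> \<forall>x\<in>X. \<forall>y\<in>X.
        S t (lam *\<^sub>R x + (1 - lam) *\<^sub>R y) \<le> lam *\<^sub>R S t x + (1 - lam) *\<^sub>R K t y"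
      using assms(3) t unfolding K_convex_def by blast
    have "S t ((0::real) *\<^sub>R u + (1 - 0) *\<^sub>R u) \<le> (0::real) *\<^sub>R S t u + (1 - 0) *\<^sub>R K t u"
      using KC[of 0] u by auto
    hence le1: "S t u \<le> K t u" by simp
    have K2: "\<forall>x\<in>X. \<forall>y\<in>X. S t ((1/2::real) *\<^sub>R x + (1/2::real) *\<^sub>R y) \<le> (1/2::real) *\<^sub>R S t x + (1/2::real) *\<^sub>R K t y"
      using KC[of "1/2"] by simp
    have c2: "S t ((1/2::real) *\<^sub>R u + (1/2::real) *\<^sub>R (- u)) \<le> (1/2::real) *\<^sub>R S t u + (1/2::real) *\<^sub>R K t (- u)"
      using K2 u mu by blast
    have e: "(1/2::real) *\<^sub>R u + (1/2::real) *\<^sub>R (- u) = 0"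
      by simp
    from c2 have "S t 0 \<le> (1/2::real) *\<^sub>R S t u + (1/2::real) *\<^sub>R K t (- u)"
      by (simp only: e)
    with assms(4) t have "0 \<le> (1/2::real) *\<^sub>R S t u + (1/2::real) *\<^sub>R K t (- u)"
      using order_trans by blast
    hence "0 \<le> (1/2::real) *\<^sub>R (S t u + K t (- u))" by (simp add: scaleR_right_distrib)
    hence "(2::real) *\<^sub>R 0 \<le> (2::real) *\<^sub>R ((1/2::real) *\<^sub>R (S t u + K t (- u)))"
      by (intro scaleR_left_mono) auto
    hence h0: "0 \<le> S t u + K t (- u)" by simp
    have "- S t u + 0 \<le> - S t u + (S t u + K t (- u))" using h0 by (rule add_left_mono)
    hence le2: "- S t u \<le> K t (- u)" by simp
    show ?thesis
    proof (rule vabs_le)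
      have "S t u - v \<le> K t u - v" using le1 by (simp add: diff_right_mono)
      also have "\<dots> \<le> vabs (K t u - v)" by (rule vabs_ge)
      also have "\<dots> \<le> vabs (K t u - v) + vabs (K t (- u) + v)"
        using vabs_nonneg[of "K t (- u) + v"] by simp
      finally show "S t u - v \<le> vabs (K t u - v) + vabs (K t (- u) + v)" .
    next
      have "- (S t u - v) = - S t u + v" by simp
      also have "\<dots> \<le> K t (- u) + v" using le2 by (simp add: add_right_mono)
      also have "\<dots> \<le> vabs (K t (- u) + v)" by (rule vabs_ge)
      also have "\<dots> \<le> vabs (K t u - v) + vabs (K t (- u) + v)"
        using vabs_nonneg[of "K t u - v"] by simp
      finally show "- (S t u - v) \<le> vabs (K t u - v) + vabs (K t (- u) + v)" .
    qed
  qed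
  have B: "p (S t u - v) \<le> p (K t u - v) + p (K t (- u) + v)"
    if p: "lattice_seminorm p" and t: "t \<ge> 0" and u: "u \<in> X" and v: "v \<in> X" for p t u v
  proof -
    let ?a = "K t u - v" and ?b = "K t (- u) + v"
    have sn: "seminorm p" and mon: "\<And>x y. vabs x \<le> vabs y \<Longrightarrow> p x \<le> p y"
      using p by (auto simp: lattice_seminorm_def)
    have w0: "0 \<le> vabs ?a + vabs ?b" using vabs_nonneg[of ?a] vabs_nonneg[of ?b] by (simp add: add_nonneg_nonneg)
    have "vabs (S t u - v) \<le> vabs (vabs ?a + vabs ?b)"
      using A[OF t u v] vabs_of_nonneg[OF w0] by simp
    hence "p (S t u - v) \<le> p (vabs ?a + vabs ?b)" by (rule mon)
    also have "\<dots> \<le> p (vabs ?a) + p (vabs ?b)" using sn by (simp add: seminorm_def)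
    also have "p (vabs ?a) = p ?a"
      using mon[of "vabs ?a" ?a] mon[of ?a "vabs ?a"] vabs_of_nonneg[OF vabs_nonneg[of ?a]] by simp
    also have "p (vabs ?b) = p ?b"
      using mon[of "vabs ?b" ?b] mon[of ?b "vabs ?b"] vabs_of_nonneg[OF vabs_nonneg[of ?b]] by simp
    finally show ?thesis .
  qed
  show ?thesis using A B by blast
qed

end
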